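(* Let $\omega\in\mathbb{F}_8$ be a root of $y^3+y+1$, let $m\in\mathbb{N}$ and let $L,M,N$ be nonempty subsets of $[m]$ such that at least two of the sets $L\setminus(M\cup N)$, $M\setminus(N\cup L)$, $N\setminus(L\cup M)$ are nonempty. Let $D=\Delta_L+\omega\Delta_M+\omega^2\Delta_N\subseteq\mathbb{F}_8^m$ and $D^*=D\setminus\{0\}$. Then $C_{D^*}$ is a $3$-weight linear code over $\mathbb{F}_8$ of length $2^{|L|+|M|+|N|}-1$, dimension $|L\cup M\cup N|$ and minimum distance $2^{|L|+|M|+|N|-1}$; its codewords have weights $0$, $2^{|L|+|M|+|N|-1}$, $6\cdot 2^{|L|+|M|+|N|-3}$ and $7\cdot 2^{|L|+|M|+|N|-3}$. Moreover, if $A_i$ denotes the number of codewords of $C_{D^*}$ of weight $i$ and $Z_i=|\{v\in\mathbb{F}_8^m: wt(c_{D^*}(v))=i\}|$ for $0\le i\le|D^*|$, then $Z_0=2^{3(m-|L\cup M\cup N|)}$ and $Z_i=Z_0A_i$.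
   Context: $[m]=\{1,\dots,m\}$. For $w\in\mathbb{F}_2^m$, $\mathrm{Supp}(w)=\{i: w_i\neq0\}$; for $L\subseteq[m]$, $\Delta_L=\{w\in\mathbb{F}_2^m:\mathrm{Supp}(w)\subseteq L\}$. For $A,B,C\subseteq\mathbb{F}_2^m$, $A+\omega B+\omega^2C=\{a+\omega b+\omega^2c: a\in A,b\in B,c\in C\}$. For an ordered finite set $P\subseteq\mathbb{F}_8^m$, $c_P(v)=(v\cdot d)_{d\in P}$ with $v\cdot d=\sum_iv_id_i$, and $C_P=\{c_P(v): v\in\mathbb{F}_8^m\}$. An $l$-weight code is one whose nonzero codewords take exactly $l$ distinct Hamming weights. *)

theory Defs
  imports Complex_Main "HOL-Library.Function_Algebras"
begin

text \<open>Vectors of F^m are functions nat => 'a vanishing outside [m] = {1..m}.\<close>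

definition vecs :: "nat \<Rightarrow> (nat \<Rightarrow> 'a::zero) set" where
  "vecs m = {v. \<forall>i. i \<notin> {1..m} \<longrightarrow> v i = 0}"

definition Delta :: "nat set \<Rightarrow> (nat \<Rightarrow> 'a::{zero,one}) set" where
  "Delta L = {w. \<forall>i. w i \<in> {0, 1} \<and> (w i \<noteq> 0 \<longrightarrow> i \<in> L)}"

definition comb3 :: "'a::comm_ring_1 \<Rightarrow> (nat \<Rightarrow> 'a) set \<Rightarrow> (nat \<Rightarrow> 'a) set \<Rightarrow> (nat \<Rightarrow> 'a) set \<Rightarrow> (nat \<Rightarrow> 'a) set" where
  "comb3 \<omega> A B C = {(\<lambda>i. a i + \<omega> * b i + \<omega>^2 * c i) | a b c. a \<in> A \<and> b \<in> B \<and> c \<in> C}"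

definition dotp :: "nat \<Rightarrow> (nat \<Rightarrow> 'a::comm_ring_1) \<Rightarrow> (nat \<Rightarrow> 'a) \<Rightarrow> 'a" where
  "dotp m v d = (\<Sum>i\<in>{1..m}. v i * d i)"

text \<open>Codeword c_P(v), indexed by the elements d of P (coordinates outside P are 0).\<close>
definition cw :: "nat \<Rightarrow> (nat \<Rightarrow> 'a::comm_ring_1) set \<Rightarrow> (nat \<Rightarrow> 'a) \<Rightarrow> ((nat \<Rightarrow> 'a) \<Rightarrow> 'a)" where
  "cw m P v = (\<lambda>d. if d \<in> P then dotp m v d else 0)"

definition code :: "nat \<Rightarrow> (nat \<Rightarrow> 'a::comm_ring_1) set \<Rightarrow> ((nat \<Rightarrow> 'a) \<Rightarrow> 'a) set" where
  "code m P = cw m P ` vecs m"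

definition wt :: "'b set \<Rightarrow> ('b \<Rightarrow> 'a::zero) \<Rightarrow> nat" where
  "wt P c = card {d \<in> P. c d \<noteq> 0}"

definition cscale :: "'a::times \<Rightarrow> ('b \<Rightarrow> 'a) \<Rightarrow> ('b \<Rightarrow> 'a)" where
  "cscale x f = (\<lambda>d. x * f d)"

definition weights :: "'b set \<Rightarrow> ('b \<Rightarrow> 'a::zero) set \<Rightarrow> nat set" where
  "weights P C = wt P ` (C - {0})"

definition l_weight_code :: "nat \<Rightarrow> 'b set \<Rightarrow> ('b \<Rightarrow> 'a::zero) set \<Rightarrow> bool" where
  "l_weight_code l P C \<longleftrightarrow> card (weights P C) = l"

definition min_dist :: "'b set \<Rightarrow> ('b \<Rightarrow> 'a::zero) set \<Rightarrow> nat" where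
  "min_dist P C = Min (weights P C)"

end

theory Submission
  imports Defs "HOL-Computational_Algebra.Primes" "HOL-Library.FuncSet"
begin

lemma char2_of_card8:
  assumes F8: "card (UNIV :: 'a::field set) = 8"
  shows "(1::'a) + 1 = 0"
proof -
  have inj: "inj (\<lambda>x::'a. x + 1)" by (rule injI) simp
  have "surj (\<lambda>x::'a. x + 1)" by (rule surjI[of _ "\<lambda>x. x - 1"]) simp
  hence surj: "range (\<lambda>x::'a. x + 1) = UNIV" by simp
  have "(\<Sum>x\<in>(UNIV::'a set). x) = (\<Sum>x\<in>range (\<lambda>x::'a. x + 1). x)" using surj by simp
  also have "\<dots> = (\<Sum>x\<in>(UNIV::'a set). x + 1)" by (subst sum.reindex[OF inj]) simp
  also have "\<dots> = (\<Sum>x\<in>(UNIV::'a set). x) + of_nat 8"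
    by (simp add: sum.distrib F8)
  finally have "(of_nat 8 :: 'a) = 0" by simp
  hence "(2::'a) * (2 * 2) = 0" by simp
  hence "(2::'a) = 0" by (simp only: mult_eq_0_iff) blast
  thus ?thesis by simp
qed

lemma card_fibers_const:
  assumes "finite A" "\<And>y. y \<in> f ` A \<Longrightarrow> card {a\<in>A. f a = y} = k"
  shows "card A = card (f ` A) * k"
proof -
  have "A = (\<Union>y\<in>f ` A. {a\<in>A. f a = y})" by auto
  hence "card A = card (\<Union>y\<in>f ` A. {a\<in>A. f a = y})" by simp
  also have "\<dots> = (\<Sum>y\<in>f ` A. card {a\<in>A. f a = y})"
    by (rule card_UN_disjoint) (use assms in auto)
  also have "\<dots> = (\<Sum>y\<in>f ` A. k)" using assms(2) by simp
  finally show ?thesis by simp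
qed

interpretation cs: vector_space "cscale :: 'a::field \<Rightarrow> ('b \<Rightarrow> 'a) \<Rightarrow> 'b \<Rightarrow> 'a"
  by unfold_locales (auto simp: cscale_def fun_eq_iff algebra_simps)

locale setup8 =
  fixes \<omega> :: "'a::field" and m :: nat and L M N :: "nat set"
  assumes F8: "card (UNIV :: 'a set) = 8"
    and root: "\<omega>^3 + \<omega> + 1 = 0"
    and LMN: "L \<subseteq> {1..m}" "M \<subseteq> {1..m}" "N \<subseteq> {1..m}"
    and ne: "L \<noteq> {}" "M \<noteq> {}" "N \<noteq> {}"
begin

lemma c2: "(1::'a) + 1 = 0" using char2_of_card8[OF F8] .

lemma xx: "(x::'a) + x = 0"
proof -
  have "x + x = (1 + 1) * x" by (simp add: algebra_simps)
  thus ?thesis using c2 by simp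
qed

lemma neg: "- (x::'a) = x" using xx[of x] by (rule minus_unique)
lemma minus_eq_plus: "(x::'a) - y = x + y" by (simp only: diff_conv_add_uminus neg)

lemma two0: "(2::'a) = 0" using c2 by simp
lemma sum0: "(a::'a) + b = 0 \<longleftrightarrow> a = b"
proof -
  have "a + b = a - b" using minus_eq_plus[of a b] by simp
  thus ?thesis by (metis right_minus_eq)
qed

lemma finF: "finite (UNIV :: 'a set)" using F8 card.infinite by fastforce

lemma w0: "\<omega> \<noteq> 0" using root by auto
lemma w1: "\<omega> \<noteq> 1"
proof
  assume h: "\<omega> = 1"
  have "(1::'a) + 1 + 1 = 0" using root unfolding h by simp
  moreover have "(1::'a) + 1 + 1 = 1" by (simp only: c2 add_0_left)
  ultimately show False by simp
qed
lemma w2_0: "\<omega>^2 \<noteq> 0" using w0 by simp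
lemma cube: "\<omega>^3 = \<omega> * \<omega>^2" by (simp add: power3_eq_cube power2_eq_square)
lemma w2_1: "\<omega>^2 \<noteq> 1"
proof
  assume "\<omega>^2 = 1"
  hence "\<omega>^3 = \<omega>" using cube by simp
  hence "\<omega> + \<omega> + 1 = 0" using root by simp
  thus False by (simp only: xx add_0_left) simp
qed
lemma w2_w: "\<omega>^2 \<noteq> \<omega>"
proof
  assume "\<omega>^2 = \<omega>"
  hence "\<omega> * \<omega> = \<omega> * 1" by (simp add: power2_eq_square)
  hence "\<omega> = 1" using w0 by simp
  thus False using w1 by simp
qed
lemma w2_1w: "\<omega>^2 \<noteq> 1 + \<omega>"
proof
  assume h: "\<omega>^2 = 1 + \<omega>"
  have "\<omega>^3 = \<omega> * (1 + \<omega>)" using cube h by simp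
  also have "\<dots> = \<omega> + \<omega>^2" by (simp add: distrib_left power2_eq_square)
  also have "\<dots> = (\<omega> + \<omega>) + 1" unfolding h by (simp only: add.commute add.left_commute)
  also have "\<dots> = 1" by (simp only: xx add_0_left)
  finally have "\<omega>^3 = 1" .
  hence "1 + \<omega> + 1 = 0" using root by simp
  hence "\<omega> + (1 + 1) = 0" by (simp only: add.commute add.left_commute)
  hence "\<omega> = 0" by (simp only: c2 add_0_right)
  thus False using w0 by simp
qed

lemma indep:
  assumes "x \<in> {0,1}" "y \<in> {0,1}" "z \<in> {0,1}" "x + \<omega> * y + \<omega>^2 * z = (0::'a)"
  shows "x = 0 \<and> y = 0 \<and> z = 0"
proof -
  have f: "1 \<noteq> \<omega>" "1 \<noteq> \<omega>^2" "\<omega> \<noteq> \<omega>^2" "1 + \<omega> \<noteq> \<omega>^2" "\<omega> \<noteq> 0" "\<omega>^2 \<noteq> 0"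
    using w0 w1 w2_0 w2_1 w2_w w2_1w by metis+
  from assms(1-3) have "x = 0 \<or> x = 1" "y = 0 \<or> y = 1" "z = 0 \<or> z = 1" by auto
  thus ?thesis using assms(4) f
    by (elim disjE) (simp_all add: sum0 del: power_eq_0_iff)
qed


lemma fL: "finite L" and fM: "finite M" and fN: "finite N"
  using LMN finite_subset by blast+

definition "D = comb3 \<omega> (Delta L) (Delta M) (Delta N)"
definition "U = L \<union> M \<union> N"
definition "s = card L + card M + card N"
definition "Ds = D - {0}"

lemma fU: "finite U" using fL fM fN U_def by simp
lemma U_sub: "U \<subseteq> {1..m}" using LMN U_def by auto

lemma Delta_add: "a \<in> Delta X \<Longrightarrow> b \<in> Delta X \<Longrightarrow> a + b \<in> (Delta X :: (nat \<Rightarrow> 'a) set)"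
  unfolding Delta_def
proof (clarsimp)
  fix i
  assume a: "\<forall>i. (a i = 0 \<or> a i = 1) \<and> (a i \<noteq> 0 \<longrightarrow> i \<in> X)"
     and b: "\<forall>i. (b i = 0 \<or> b i = 1) \<and> (b i \<noteq> 0 \<longrightarrow> i \<in> X)"
  show "(a i + b i = 0 \<or> a i + b i = 1) \<and> (a i + b i \<noteq> 0 \<longrightarrow> i \<in> X)"
    using a[rule_format, of i] b[rule_format, of i] c2 by auto
qed

lemma Delta_0: "0 \<in> Delta X" by (simp add: Delta_def)

lemma D_mem: "d \<in> D \<longleftrightarrow> (\<exists>a b c. a \<in> Delta L \<and> b \<in> Delta M \<and> c \<in> Delta N \<and>
     d = (\<lambda>i. a i + \<omega> * b i + \<omega>^2 * c i))"
  unfolding D_def comb3_def by blast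

lemma D_add: assumes "x \<in> D" "y \<in> D" shows "x + y \<in> D"
proof -
  obtain a b c where abc: "a \<in> Delta L" "b \<in> Delta M" "c \<in> Delta N" "x = (\<lambda>i. a i + \<omega> * b i + \<omega>^2 * c i)"
    using assms(1) D_mem by blast
  obtain a' b' c' where abc': "a' \<in> Delta L" "b' \<in> Delta M" "c' \<in> Delta N" "y = (\<lambda>i. a' i + \<omega> * b' i + \<omega>^2 * c' i)"
    using assms(2) D_mem by blast
  have "x + y = (\<lambda>i. (a + a') i + \<omega> * (b + b') i + \<omega>^2 * (c + c') i)"
    using abc(4) abc'(4) by (simp add: fun_eq_iff algebra_simps)
  thus ?thesis unfolding D_mem using abc abc' Delta_add by blast
qed

lemma fun_minus_plus: "(x::nat \<Rightarrow> 'a) - y = x + y"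
  by (simp add: fun_eq_iff minus_eq_plus)

lemma fun_xx: "(x::nat \<Rightarrow> 'a) + x = 0"
  by (rule ext) (simp only: plus_fun_apply xx zero_fun_apply)

lemma D_0: "0 \<in> D"
  unfolding D_mem by (rule exI[of _ 0], rule exI[of _ 0], rule exI[of _ 0]) (simp add: Delta_0 fun_eq_iff)

lemma D_coord: assumes "d \<in> D"
  shows "\<exists>x y z. x \<in> {0,1} \<and> y \<in> {0,1} \<and> z \<in> {0,1} \<and> (x \<noteq> 0 \<longrightarrow> i \<in> L) \<and>
      (y \<noteq> 0 \<longrightarrow> i \<in> M) \<and> (z \<noteq> 0 \<longrightarrow> i \<in> N) \<and> d i = x + \<omega> * y + \<omega>^2 * z"
proof -
  obtain a b c where abc: "a \<in> Delta L" "b \<in> Delta M" "c \<in> Delta N" "d = (\<lambda>i. a i + \<omega> * b i + \<omega>^2 * c i)"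
    using assms D_mem by blast
  show ?thesis
    by (rule exI[of _ "a i"], rule exI[of _ "b i"], rule exI[of _ "c i"])
       (use abc in \<open>auto simp: Delta_def\<close>)
qed

lemma D_vanish: assumes "d \<in> D" "i \<notin> U" shows "d i = 0"
  using D_coord[OF assms(1), of i] assms(2) U_def by auto

lemma D_onlyL: "d \<in> D \<Longrightarrow> i \<notin> M \<Longrightarrow> i \<notin> N \<Longrightarrow> d i \<in> {0, 1}"
  using D_coord[of d i] by auto
lemma D_onlyM: assumes "d \<in> D" "i \<notin> L" "i \<notin> N" shows "d i \<in> {0, \<omega>}"
proof -
  obtain x y z where h: "x \<in> {0,1}" "y \<in> {0,1}" "z \<in> {0,1}" "x \<noteq> 0 \<longrightarrow> i \<in> L"
    "y \<noteq> 0 \<longrightarrow> i \<in> M" "z \<noteq> 0 \<longrightarrow> i \<in> N" "d i = x + \<omega> * y + \<omega>^2 * z"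
    using D_coord[OF assms(1), of i] by blast
  have "x = 0" "z = 0" using h(4,6) assms by auto
  hence "d i = \<omega> * y" using h(7) by simp
  thus ?thesis using h(2) by auto
qed
lemma D_onlyN: assumes "d \<in> D" "i \<notin> L" "i \<notin> M" shows "d i \<in> {0, \<omega>^2}"
proof -
  obtain x y z where h: "x \<in> {0,1}" "y \<in> {0,1}" "z \<in> {0,1}" "x \<noteq> 0 \<longrightarrow> i \<in> L"
    "y \<noteq> 0 \<longrightarrow> i \<in> M" "z \<noteq> 0 \<longrightarrow> i \<in> N" "d i = x + \<omega> * y + \<omega>^2 * z"
    using D_coord[OF assms(1), of i] by blast
  have "x = 0" "y = 0" using h(4,5) assms by auto
  hence "d i = \<omega>^2 * z" using h(7) by simp
  thus ?thesis using h(3) by (auto simp del: power_eq_0_iff)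
qed

definition "dl i \<alpha> = (\<lambda>l::nat. if l = i then \<alpha> else (0::'a))"

lemma dl_L: "i \<in> L \<Longrightarrow> dl i 1 \<in> D"
  unfolding D_mem
  by (rule exI[of _ "dl i 1"], rule exI[of _ 0], rule exI[of _ 0]) (auto simp: Delta_0 Delta_def dl_def fun_eq_iff)
lemma dl_M: "i \<in> M \<Longrightarrow> dl i \<omega> \<in> D"
  unfolding D_mem
  by (rule exI[of _ 0], rule exI[of _ "dl i 1"], rule exI[of _ 0]) (auto simp: Delta_0 Delta_def dl_def fun_eq_iff)
lemma dl_N: "i \<in> N \<Longrightarrow> dl i (\<omega>^2) \<in> D"
  unfolding D_mem
  by (rule exI[of _ 0], rule exI[of _ 0], rule exI[of _ "dl i 1"]) (auto simp: Delta_0 Delta_def dl_def fun_eq_iff)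

lemma test_vec: "i \<in> U \<Longrightarrow> \<exists>\<alpha>. \<alpha> \<noteq> 0 \<and> dl i \<alpha> \<in> D"
  using dl_L dl_M dl_N w0 w2_0 U_def by (metis Un_iff one_neq_zero)

lemma card_Delta: assumes "finite X" shows "card (Delta X :: (nat \<Rightarrow> 'a) set) = 2 ^ card X"
proof -
  let ?f = "\<lambda>S. (\<lambda>i. if i \<in> S then (1::'a) else 0)"
  have "Delta X = ?f ` Pow X"
  proof
    show "Delta X \<subseteq> ?f ` Pow X"
    proof
      fix w :: "nat \<Rightarrow> 'a" assume w: "w \<in> Delta X"
      have "w = ?f {i. w i \<noteq> 0}" using w by (auto simp: Delta_def fun_eq_iff)
      moreover have "{i. w i \<noteq> 0} \<in> Pow X" using w by (auto simp: Delta_def)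
      ultimately show "w \<in> ?f ` Pow X" by blast
    qed
    show "?f ` Pow X \<subseteq> Delta X" by (auto simp: Delta_def split: if_splits)
  qed
  moreover have "inj_on ?f (Pow X)"
    by (rule inj_onI) (metis (mono_tags, lifting) one_neq_zero subsetI subset_antisym)
  ultimately show ?thesis using card_image card_Pow assms by metis
qed

lemma card_D: "card D = 2 ^ s"
proof -
  let ?g = "\<lambda>(a, b, c). (\<lambda>i. a i + \<omega> * b i + \<omega>^2 * c i) :: nat \<Rightarrow> 'a"
  have Deq: "D = ?g ` (Delta L \<times> Delta M \<times> Delta N)"
  proof (rule set_eqI, rule iffI)
    fix d assume "d \<in> D"
    then obtain a b c where "a \<in> Delta L" "b \<in> Delta M" "c \<in> Delta N" "d = (\<lambda>i. a i + \<omega> * b i + \<omega>^2 * c i)"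
      using D_mem by blast
    thus "d \<in> ?g ` (Delta L \<times> Delta M \<times> Delta N)" by (intro image_eqI[of _ _ "(a,b,c)"]) auto
  next
    fix d assume "d \<in> ?g ` (Delta L \<times> Delta M \<times> Delta N)"
    thus "d \<in> D" unfolding D_mem by auto
  qed
  have inj: "inj_on ?g (Delta L \<times> Delta M \<times> Delta N)"
  proof (rule inj_onI, clarsimp)
    fix a b c a' b' c'
    assume h: "a \<in> Delta L" "b \<in> Delta M" "c \<in> Delta N" "a' \<in> Delta L" "b' \<in> Delta M" "c' \<in> Delta N"
      and eq: "(\<lambda>i. a i + \<omega> * b i + \<omega>\<^sup>2 * c i) = (\<lambda>i. a' i + \<omega> * b' i + \<omega>\<^sup>2 * c' i)"
    have "a i = a' i \<and> b i = b' i \<and> c i = c' i" for i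
    proof -
      have e: "(a i + a' i) + \<omega> * (b i + b' i) + \<omega>^2 * (c i + c' i) = 0"
      proof -
        have "(a i + a' i) + \<omega> * (b i + b' i) + \<omega>^2 * (c i + c' i)
           = (a i + \<omega> * b i + \<omega>\<^sup>2 * c i) - (a' i + \<omega> * b' i + \<omega>\<^sup>2 * c' i)"
          by (simp add: minus_eq_plus algebra_simps)
        thus ?thesis using fun_cong[OF eq, of i] by simp
      qed
      have "(a + a') i \<in> {0,1}" "(b + b') i \<in> {0,1}" "(c + c') i \<in> {0,1}"
        using Delta_add[OF h(1) h(4)] Delta_add[OF h(2) h(5)] Delta_add[OF h(3) h(6)]
        unfolding Delta_def by blast+
      hence "a i + a' i \<in> {0,1}" "b i + b' i \<in> {0,1}" "c i + c' i \<in> {0,1}"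
        by (simp_all only: plus_fun_apply)
      from indep[OF this e] show ?thesis by (simp only: sum0)
    qed
    thus "a = a' \<and> b = b' \<and> c = c'" by (simp add: fun_eq_iff)
  qed
  have "card D = card ((Delta L :: (nat \<Rightarrow> 'a) set) \<times> (Delta M :: (nat \<Rightarrow> 'a) set) \<times> (Delta N :: (nat \<Rightarrow> 'a) set))"
    unfolding Deq by (rule card_image[OF inj])
  also have "\<dots> = 2 ^ s" using card_Delta fL fM fN by (simp add: card_cartesian_product s_def power_add)
  finally show ?thesis .
qed

lemma fD: "finite D" using card_D card.infinite by fastforce


lemma sum_fun_apply: "(\<Sum>i\<in>A. f i) x = (\<Sum>i\<in>A. f i x)"
  by (induct A rule: infinite_finite_induct) auto

lemma dotp_add_d: "dotp m v (x + y) = dotp m v x + dotp m v y"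
  by (simp add: dotp_def distrib_left sum.distrib)
lemma dotp_0_d: "dotp m v 0 = 0" by (simp add: dotp_def)
lemma dotp_add_v: "dotp m (v + w) d = dotp m v d + dotp m w d"
  by (simp add: dotp_def distrib_right sum.distrib)
lemma dotp_diff_v: "dotp m (v - w) d = dotp m v d - dotp m w d"
  by (simp add: dotp_def left_diff_distrib sum_subtractf)
lemma dotp_0_v: "dotp m 0 d = 0" by (simp add: dotp_def)
lemma dotp_scale_v: "dotp m (\<lambda>i. c * v i) d = c * dotp m v d"
  by (simp add: dotp_def sum_distrib_left mult.assoc)
lemma dotp_dl: assumes "i \<in> {1..m}" shows "dotp m (dl i 1) d = d i"
proof -
  have "dotp m (dl i 1) d = (\<Sum>l\<in>{1..m}. if l = i then d i else 0)"
    unfolding dotp_def by (rule sum.cong) (auto simp: dl_def)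
  thus ?thesis using assms by simp
qed
lemma dotp_U: assumes "d \<in> D" shows "dotp m v d = (\<Sum>i\<in>U. v i * d i)"
  unfolding dotp_def
  by (rule sum.mono_neutral_right) (use U_sub D_vanish[OF assms] in auto)

lemma dl_apply: "dl i \<alpha> j = (if j = i then \<alpha> else 0)" by (simp add: dl_def)

lemma wt_eq: "wt Ds (cw m Ds v) = card D - card {d\<in>D. dotp m v d = 0}"
proof -
  have "{d\<in>Ds. cw m Ds v d \<noteq> 0} = D - {d\<in>D. dotp m v d = 0}"
    using dotp_0_d by (auto simp: Ds_def cw_def)
  thus ?thesis unfolding wt_def using fD by (simp add: card_Diff_subset)
qed

lemma s_ge3: "s \<ge> 3"
proof -
  have "card L \<ge> 1" "card M \<ge> 1" "card N \<ge> 1" using fL fM fN ne by (auto simp: Suc_le_eq card_gt_0_iff)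
  thus ?thesis by (simp add: s_def)
qed

lemma key: "\<exists>k\<le>3. card ((\<lambda>d. dotp m v d) ` D) = 2^k \<and> card {d\<in>D. dotp m v d = 0} = 2^(s-k)"
proof -
  let ?f = "\<lambda>d. dotp m v d"
  let ?Z = "{d\<in>D. dotp m v d = 0}"
  have fib: "card {d\<in>D. ?f d = y} = card ?Z" if y: "y \<in> ?f ` D" for y
  proof -
    obtain d0 where d0: "d0 \<in> D" "y = ?f d0" using y by blast
    have "{d\<in>D. ?f d = y} = (\<lambda>d. d + d0) ` ?Z"
    proof (rule set_eqI, rule iffI)
      fix e assume e: "e \<in> {d\<in>D. ?f d = y}"
      have "?f (e + d0) = ?f e + ?f d0" by (rule dotp_add_d)
      hence "?f (e + d0) = 0" using e d0 xx by simp
      hence "e + d0 \<in> ?Z" using e d0 D_add by auto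
      moreover have "e = (e + d0) + d0" using fun_xx[of d0] by (simp add: add.assoc)
      ultimately show "e \<in> (\<lambda>d. d + d0) ` ?Z" by blast
    next
      fix e assume "e \<in> (\<lambda>d. d + d0) ` ?Z"
      then obtain z where z: "z \<in> ?Z" "e = z + d0" by blast
      have "?f (z + d0) = ?f z + ?f d0" by (rule dotp_add_d)
      thus "e \<in> {d\<in>D. ?f d = y}" using z d0 D_add by auto
    qed
    moreover have "inj_on (\<lambda>d. d + d0) ?Z" by (rule inj_onI) simp
    ultimately show ?thesis by (simp add: card_image)
  qed
  have cD: "card D = card (?f ` D) * card ?Z"
    by (rule card_fibers_const[OF fD]) (use fib in auto)
  hence "card (?f ` D) dvd 2^s" using card_D by (metis dvd_triv_left)
  then obtain k where k: "k \<le> s" "card (?f ` D) = 2^k"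
    using divides_primepow_nat[of 2] by auto
  have "card (?f ` D) \<le> card (UNIV :: 'a set)" by (rule card_mono[OF finF]) simp
  hence k8: "(2::nat)^k \<le> 8" using k F8 by simp
  have k3: "k \<le> 3"
  proof (rule ccontr)
    assume "\<not> k \<le> 3" hence "4 \<le> k" by simp
    hence "(2::nat)^4 \<le> 2^k" by (rule power_increasing) simp
    thus False using k8 by simp
  qed
  have "2^k * 2^(s-k) = (2::nat)^s" using k(1) by (simp add: power_add[symmetric])
  hence "card ?Z = 2^(s-k)" using cD card_D k(2) by (metis mult_left_cancel power_not_zero zero_neq_numeral)
  thus ?thesis using k k3 by blast
qed

lemma wt_values: "\<exists>k\<le>3. card ((\<lambda>d. dotp m v d) ` D) = 2^k \<and> wt Ds (cw m Ds v) = 2^s - 2^(s-k)"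
  using key[of v] wt_eq[of v] card_D by auto

lemma pow_vals:
  assumes "k \<le> (3::nat)"
  shows "(2::nat)^s - 2^(s-k) \<in> {0, 2^(s-1), 6 * 2^(s-3), 7 * 2^(s-3)}"
    and "k = 0 \<Longrightarrow> (2::nat)^s - 2^(s-k) = 0"
    and "k = 1 \<Longrightarrow> (2::nat)^s - 2^(s-k) = 2^(s-1)"
    and "k = 2 \<Longrightarrow> (2::nat)^s - 2^(s-k) = 6 * 2^(s-3)"
    and "k = 3 \<Longrightarrow> (2::nat)^s - 2^(s-k) = 7 * 2^(s-3)"
proof -
  obtain t where t: "s = t + 3" using s_ge3 by (metis add.commute le_Suc_ex)
  have "k = 0 \<or> k = 1 \<or> k = 2 \<or> k = 3" using assms by auto
  thus "(2::nat)^s - 2^(s-k) \<in> {0, 2^(s-1), 6 * 2^(s-3), 7 * 2^(s-3)}"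
    by (elim disjE) (simp_all add: t power_add)
  show "k = 0 \<Longrightarrow> (2::nat)^s - 2^(s-k) = 0" by simp
  show "k = 1 \<Longrightarrow> (2::nat)^s - 2^(s-k) = 2^(s-1)" by (simp add: t power_add)
  show "k = 2 \<Longrightarrow> (2::nat)^s - 2^(s-k) = 6 * 2^(s-3)" by (simp add: t power_add)
  show "k = 3 \<Longrightarrow> (2::nat)^s - 2^(s-k) = 7 * 2^(s-3)" by (simp add: t power_add)
qed


lemma vecs_add: "(v::nat\<Rightarrow>'a) \<in> vecs m \<Longrightarrow> w \<in> vecs m \<Longrightarrow> v + w \<in> vecs m" unfolding vecs_def by auto
lemma vecs_diff: "(v::nat\<Rightarrow>'a) \<in> vecs m \<Longrightarrow> w \<in> vecs m \<Longrightarrow> v - w \<in> vecs m" unfolding vecs_def by auto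
lemma vecs_scale: "(v::nat\<Rightarrow>'a) \<in> vecs m \<Longrightarrow> (\<lambda>i. c * v i) \<in> vecs m" unfolding vecs_def by auto
lemma vecs_0: "(0::nat\<Rightarrow>'a) \<in> vecs m" unfolding vecs_def by auto
lemma dl_vecs: "i \<in> {1..m} \<Longrightarrow> dl i \<alpha> \<in> vecs m" by (auto simp: vecs_def dl_def)
lemma fin_vecs: "finite (vecs m :: (nat \<Rightarrow> 'a) set)"
proof -
  have "vecs m = {f :: nat \<Rightarrow> 'a. \<forall>x. (x \<in> {1..m} \<longrightarrow> f x \<in> UNIV) \<and> (x \<notin> {1..m} \<longrightarrow> f x = 0)}"
    by (auto simp: vecs_def)
  thus ?thesis using finite_set_of_finite_funs[of "{1..m}" "UNIV :: 'a set" 0] finF by simp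
qed

lemma w_sum3: "1 + \<omega> + \<omega>^2 \<noteq> 0"
proof
  assume h: "1 + \<omega> + \<omega>^2 = 0"
  have "(1::'a) + \<omega> * 1 + \<omega>^2 * 1 = 0" using h by (simp only: mult_1_right)
  from indep[OF _ _ _ this] show False by simp
qed
lemma w_a: "\<omega> + \<omega>^2 \<noteq> 1"
proof
  assume h: "\<omega> + \<omega>^2 = 1"
  have "1 + \<omega> + \<omega>^2 = 1 + (\<omega> + \<omega>^2)" by (simp only: add.assoc)
  also have "\<dots> = 1 + 1" using h by (simp only:)
  also have "\<dots> = 0" by (rule c2)
  finally show False using w_sum3 by blast
qed
lemma w_b: "1 + \<omega>^2 \<noteq> \<omega>"
proof
  assume h: "1 + \<omega>^2 = \<omega>"
  have "1 + \<omega> + \<omega>^2 = (1 + \<omega>^2) + \<omega>" by (simp only: ac_simps)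
  also have "\<dots> = \<omega> + \<omega>" using h by (simp only:)
  also have "\<dots> = 0" by (rule xx)
  finally show False using w_sum3 by blast
qed

lemma config:
  assumes ijk: "i \<in> {1..m}" "j \<in> {1..m}" "k \<in> {1..m}" "i \<noteq> j" "k \<noteq> i" "k \<noteq> j"
    and ne0: "\<alpha> \<noteq> 0" "\<beta> \<noteq> 0" "\<gamma> \<noteq> 0"
    and dist: "\<alpha> \<noteq> \<beta>" "\<alpha> + \<beta> \<noteq> \<gamma>" "\<gamma> \<noteq> \<alpha>" "\<gamma> \<noteq> \<beta>"
    and ci: "\<And>d. d \<in> D \<Longrightarrow> d i \<in> {0, \<alpha>}" and cj: "\<And>d. d \<in> D \<Longrightarrow> d j \<in> {0, \<beta>}"
    and mem: "dl i \<alpha> \<in> D" "dl j \<beta> \<in> D" "dl k \<gamma> \<in> D"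
  shows "\<exists>v\<in>vecs m. wt Ds (cw m Ds v) = 2^(s-1)"
    and "\<exists>v\<in>vecs m. wt Ds (cw m Ds v) = 6 * 2^(s-3)"
    and "\<exists>v\<in>vecs m. wt Ds (cw m Ds v) = 7 * 2^(s-3)"
proof -
  have z: "(0::nat \<Rightarrow> 'a) \<in> D" by (rule D_0)
  have fH: "finite ((\<lambda>d. dotp m v d) ` D)" for v using fD by simp
  let ?v1 = "dl i 1"
  have f1: "dotp m ?v1 d = d i" for d using dotp_dl ijk by simp
  have "(\<lambda>d. dotp m ?v1 d) ` D = {0, \<alpha>}"
  proof
    show "(\<lambda>d. dotp m ?v1 d) ` D \<subseteq> {0, \<alpha>}" using ci f1 by auto
    have "0 = dotp m ?v1 0" "\<alpha> = dotp m ?v1 (dl i \<alpha>)" using f1 by (auto simp: dl_apply)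
    thus "{0, \<alpha>} \<subseteq> (\<lambda>d. dotp m ?v1 d) ` D" using z mem by blast
  qed
  hence c1: "card ((\<lambda>d. dotp m ?v1 d) ` D) = 2" using ne0 by simp
  obtain k1 where k1: "k1 \<le> 3" "card ((\<lambda>d. dotp m ?v1 d) ` D) = 2^k1" "wt Ds (cw m Ds ?v1) = 2^s - 2^(s-k1)"
    using wt_values by blast
  have "k1 = 1" using k1(2) c1 by (metis power_one_right power_inject_exp one_less_numeral_iff semiring_norm(76))
  thus "\<exists>v\<in>vecs m. wt Ds (cw m Ds v) = 2^(s-1)" using k1 pow_vals(3) dl_vecs ijk by metis
  let ?v2 = "dl i 1 + dl j 1"
  have f2: "dotp m ?v2 d = d i + d j" for d
  proof -
    have "dotp m ?v2 d = dotp m (dl i 1) d + dotp m (dl j 1) d" by (rule dotp_add_v)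
    thus ?thesis using dotp_dl ijk by simp
  qed
  have "(\<lambda>d. dotp m ?v2 d) ` D = {0, \<alpha>, \<beta>, \<alpha> + \<beta>}"
  proof
    show "(\<lambda>d. dotp m ?v2 d) ` D \<subseteq> {0, \<alpha>, \<beta>, \<alpha> + \<beta>}"
    proof
      fix x assume "x \<in> (\<lambda>d. dotp m ?v2 d) ` D"
      then obtain d where d: "d \<in> D" "x = d i + d j" using f2 by auto
      show "x \<in> {0, \<alpha>, \<beta>, \<alpha> + \<beta>}" using ci[OF d(1)] cj[OF d(1)] d(2) by auto
    qed
    have "0 = dotp m ?v2 0" "\<alpha> = dotp m ?v2 (dl i \<alpha>)" "\<beta> = dotp m ?v2 (dl j \<beta>)"
      "\<alpha> + \<beta> = dotp m ?v2 (dl i \<alpha> + dl j \<beta>)"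
      using f2 ijk by (auto simp: dl_apply)
    moreover have "dl i \<alpha> + dl j \<beta> \<in> D" using mem D_add by blast
    ultimately show "{0, \<alpha>, \<beta>, \<alpha> + \<beta>} \<subseteq> (\<lambda>d. dotp m ?v2 d) ` D" using z mem by blast
  qed
  moreover have "\<alpha> + \<beta> \<noteq> 0" "\<alpha> + \<beta> \<noteq> \<alpha>" "\<alpha> + \<beta> \<noteq> \<beta>" using dist ne0 sum0 by auto
  ultimately have c2': "card ((\<lambda>d. dotp m ?v2 d) ` D) = 4" using ne0 dist by auto
  obtain k2 where k2: "k2 \<le> 3" "card ((\<lambda>d. dotp m ?v2 d) ` D) = 2^k2" "wt Ds (cw m Ds ?v2) = 2^s - 2^(s-k2)"
    using wt_values by blast
  have "k2 = 2"
  proof -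
    have "k2 = 0 \<or> k2 = 1 \<or> k2 = 2 \<or> k2 = 3" using k2(1) by auto
    thus ?thesis using k2(2) c2' by auto
  qed
  moreover have "?v2 \<in> vecs m" using dl_vecs vecs_add ijk by blast
  ultimately show "\<exists>v\<in>vecs m. wt Ds (cw m Ds v) = 6 * 2^(s-3)" using k2 pow_vals(4) by metis
  let ?v3 = "dl i 1 + dl j 1 + dl k 1"
  have f3: "dotp m ?v3 d = d i + d j + d k" for d
  proof -
    have "dotp m ?v3 d = dotp m (dl i 1 + dl j 1) d + dotp m (dl k 1) d" by (rule dotp_add_v)
    also have "\<dots> = (dotp m (dl i 1) d + dotp m (dl j 1) d) + dotp m (dl k 1) d"
      by (subst dotp_add_v) (rule refl)
    also have "\<dots> = d i + d j + d k"
      by (simp only: dotp_dl[OF ijk(1)] dotp_dl[OF ijk(2)] dotp_dl[OF ijk(3)])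
    finally show ?thesis .
  qed
  have "0 = dotp m ?v3 0" "\<alpha> = dotp m ?v3 (dl i \<alpha>)" "\<beta> = dotp m ?v3 (dl j \<beta>)"
      "\<alpha> + \<beta> = dotp m ?v3 (dl i \<alpha> + dl j \<beta>)" "\<gamma> = dotp m ?v3 (dl k \<gamma>)"
    using f3 ijk by (auto simp: dl_apply)
  moreover have "dl i \<alpha> + dl j \<beta> \<in> D" using mem D_add by blast
  ultimately have sub: "{0, \<alpha>, \<beta>, \<alpha> + \<beta>, \<gamma>} \<subseteq> (\<lambda>d. dotp m ?v3 d) ` D" using z mem by blast
  have "card {0, \<alpha>, \<beta>, \<alpha> + \<beta>, \<gamma>} = 5"
    using \<open>\<alpha> + \<beta> \<noteq> 0\<close> \<open>\<alpha> + \<beta> \<noteq> \<alpha>\<close> \<open>\<alpha> + \<beta> \<noteq> \<beta>\<close> ne0 dist by auto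
  hence c3: "card ((\<lambda>d. dotp m ?v3 d) ` D) \<ge> 5" using card_mono[OF fH sub] by simp
  obtain k3 where k3: "k3 \<le> 3" "card ((\<lambda>d. dotp m ?v3 d) ` D) = 2^k3" "wt Ds (cw m Ds ?v3) = 2^s - 2^(s-k3)"
    using wt_values by blast
  have "k3 = 3"
  proof -
    have "k3 = 0 \<or> k3 = 1 \<or> k3 = 2 \<or> k3 = 3" using k3(1) by auto
    thus ?thesis using k3(2) c3 by auto
  qed
  moreover have "?v3 \<in> vecs m" using dl_vecs vecs_add ijk by blast
  ultimately show "\<exists>v\<in>vecs m. wt Ds (cw m Ds v) = 7 * 2^(s-3)" using k3 pow_vals(5) by metis
qed


lemma nzs: "(1::'a) \<noteq> \<omega>" "1 \<noteq> \<omega>^2" "\<omega> \<noteq> \<omega>^2" "\<omega>^2 \<noteq> 1" "\<omega>^2 \<noteq> \<omega>" "\<omega> \<noteq> 1"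
  using w1 w2_1 w2_w by metis+

lemma ex3:
  assumes two: "(L - (M \<union> N) \<noteq> {} \<and> M - (N \<union> L) \<noteq> {})
            \<or> (M - (N \<union> L) \<noteq> {} \<and> N - (L \<union> M) \<noteq> {})
            \<or> (L - (M \<union> N) \<noteq> {} \<and> N - (L \<union> M) \<noteq> {})"
  shows "(\<exists>v\<in>vecs m. wt Ds (cw m Ds v) = 2^(s-1)) \<and> (\<exists>v\<in>vecs m. wt Ds (cw m Ds v) = 6 * 2^(s-3))
     \<and> (\<exists>v\<in>vecs m. wt Ds (cw m Ds v) = 7 * 2^(s-3))"
proof -
  from two consider (LM) "L - (M \<union> N) \<noteq> {}" "M - (N \<union> L) \<noteq> {}"
    | (MN) "M - (N \<union> L) \<noteq> {}" "N - (L \<union> M) \<noteq> {}"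
    | (LN) "L - (M \<union> N) \<noteq> {}" "N - (L \<union> M) \<noteq> {}" by blast
  then show ?thesis
  proof cases
    case LM
    then obtain i j where i: "i \<in> L" "i \<notin> M" "i \<notin> N" and j: "j \<in> M" "j \<notin> N" "j \<notin> L" by blast
    obtain k where k: "k \<in> N" using ne by blast
    have ijk: "i \<in> {1..m}" "j \<in> {1..m}" "k \<in> {1..m}" using LMN i j k by auto
    have d: "i \<noteq> j" "k \<noteq> i" "k \<noteq> j" using i j k by auto
    have ci: "\<And>d. d \<in> D \<Longrightarrow> d i \<in> {0, 1}" using D_onlyL i by blast
    have cj: "\<And>d. d \<in> D \<Longrightarrow> d j \<in> {0, \<omega>}" using D_onlyM j by blast
    show ?thesis
      by (intro conjI; rule config[of i j k 1 \<omega> "\<omega>^2"]; (rule ijk d one_neq_zero w0 w2_0 nzs(1) w2_1w[symmetric] nzs(4) nzs(5) ci cj dl_L[OF i(1)] dl_M[OF j(1)] dl_N[OF k])?)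
  next
    case MN
    then obtain i j where i: "i \<in> M" "i \<notin> N" "i \<notin> L" and j: "j \<in> N" "j \<notin> L" "j \<notin> M" by blast
    obtain k where k: "k \<in> L" using ne by blast
    have ijk: "i \<in> {1..m}" "j \<in> {1..m}" "k \<in> {1..m}" using LMN i j k by auto
    have d: "i \<noteq> j" "k \<noteq> i" "k \<noteq> j" using i j k by auto
    have ci: "\<And>d. d \<in> D \<Longrightarrow> d i \<in> {0, \<omega>}" using D_onlyM i by blast
    have cj: "\<And>d. d \<in> D \<Longrightarrow> d j \<in> {0, \<omega>^2}" using D_onlyN j by blast
    show ?thesis
      by (intro conjI; rule config[of i j k \<omega> "\<omega>^2" 1]; (rule ijk d w0 w2_0 one_neq_zero nzs(3) w_a nzs(1) nzs(2) ci cj dl_M[OF i(1)] dl_N[OF j(1)] dl_L[OF k])?)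
  next
    case LN
    then obtain i j where i: "i \<in> L" "i \<notin> M" "i \<notin> N" and j: "j \<in> N" "j \<notin> L" "j \<notin> M" by blast
    obtain k where k: "k \<in> M" using ne by blast
    have ijk: "i \<in> {1..m}" "j \<in> {1..m}" "k \<in> {1..m}" using LMN i j k by auto
    have d: "i \<noteq> j" "k \<noteq> i" "k \<noteq> j" using i j k by auto
    have ci: "\<And>d. d \<in> D \<Longrightarrow> d i \<in> {0, 1}" using D_onlyL i by blast
    have cj: "\<And>d. d \<in> D \<Longrightarrow> d j \<in> {0, \<omega>^2}" using D_onlyN j by blast
    show ?thesis
      by (intro conjI; rule config[of i j k 1 "\<omega>^2" \<omega>]; (rule ijk d one_neq_zero w2_0 w0 nzs(2) w_b nzs(6) nzs(3) ci cj dl_L[OF i(1)] dl_N[OF j(1)] dl_M[OF k])?)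
  qed
qed

definition "C = code m Ds"
lemma C_eq: "C = cw m Ds ` vecs m" by (simp add: C_def code_def)

lemma cw_add: "cw m P (v + w) = cw m P v + cw m P w"
proof (rule ext)
  fix d
  have "dotp m (v + w) d = dotp m v d + dotp m w d" by (rule dotp_add_v)
  thus "cw m P (v + w) d = (cw m P v + cw m P w) d" by (simp add: cw_def)
qed
lemma cw_diff: "cw m P (v - w) = cw m P v - cw m P w"
proof (rule ext)
  fix d
  have "dotp m (v - w) d = dotp m v d - dotp m w d" by (rule dotp_diff_v)
  thus "cw m P (v - w) d = (cw m P v - cw m P w) d" by (simp add: cw_def)
qed
lemma cw_scale: "cw m P (\<lambda>i. c * v i) = cscale c (cw m P v)"
  by (rule ext) (simp add: cw_def cscale_def dotp_scale_v)
lemma cw_0: "cw m P 0 = 0"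
  by (rule ext) (simp add: cw_def dotp_0_v)

lemma subspace_C: "module.subspace cscale C"
  unfolding cs.subspace_def C_eq
proof (intro conjI ballI allI)
  show "0 \<in> cw m Ds ` vecs m" using cw_0 vecs_0 by (metis image_eqI)
next
  fix x y assume "x \<in> cw m Ds ` vecs m" "y \<in> cw m Ds ` vecs m"
  then obtain v w where "v \<in> vecs m" "w \<in> vecs m" "x = cw m Ds v" "y = cw m Ds w" by blast
  thus "x + y \<in> cw m Ds ` vecs m" using cw_add vecs_add by (metis image_eqI)
next
  fix c x assume "x \<in> cw m Ds ` vecs m"
  then obtain v where "v \<in> vecs m" "x = cw m Ds v" by blast
  thus "cscale c x \<in> cw m Ds ` vecs m" using cw_scale vecs_scale by (metis image_eqI)
qed

lemma fDs: "finite Ds" using fD Ds_def by simp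

lemma testDs: assumes "i \<in> U" obtains \<alpha> where "\<alpha> \<noteq> 0" "dl i \<alpha> \<in> Ds"
proof -
  obtain \<alpha> where a: "\<alpha> \<noteq> 0" "dl i \<alpha> \<in> D" using test_vec[OF assms] by blast
  have "dl i \<alpha> \<noteq> 0" using a(1) by (metis dl_apply zero_fun_apply)
  thus ?thesis using that a by (simp add: Ds_def)
qed

lemma cw_apply_Ds: "d \<in> Ds \<Longrightarrow> cw m Ds v d = dotp m v d" by (simp add: cw_def)

lemma dotp_test: assumes "i \<in> {1..m}" shows "dotp m v (dl i \<alpha>) = v i * \<alpha>"
proof -
  have "dotp m v (dl i \<alpha>) = (\<Sum>l\<in>{1..m}. if l = i then v i * \<alpha> else 0)"
    unfolding dotp_def by (rule sum.cong) (auto simp: dl_def)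
  thus ?thesis using assms by simp
qed

lemma dim_C: "vector_space.dim cscale C = card U"
proof -
  define b where "b i = cw m Ds (dl i 1)" for i
  have b_apply: "b i d = (if d \<in> Ds then d i else 0)" if "i \<in> U" for i d
    using that U_sub dotp_dl by (auto simp: b_def cw_def)
  have rep: "cw m Ds v = (\<Sum>i\<in>U. cscale (v i) (b i))" for v
  proof (rule ext)
    fix d
    have r: "(\<Sum>i\<in>U. cscale (v i) (b i)) d = (\<Sum>i\<in>U. v i * b i d)"
      by (simp add: sum_fun_apply cscale_def)
    show "cw m Ds v d = (\<Sum>i\<in>U. cscale (v i) (b i)) d"
    proof (cases "d \<in> Ds")
      case True
      hence "d \<in> D" by (simp add: Ds_def)
      thus ?thesis using True r b_apply dotp_U by (simp add: cw_def)
    next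
      case False
      thus ?thesis using r b_apply by (simp add: cw_def)
    qed
  qed
  let ?B = "b ` U"
  have fB: "finite ?B" using fU by simp
  have BC: "?B \<subseteq> C" unfolding C_eq b_def using dl_vecs U_sub by blast
  have CB: "C \<subseteq> cs.span ?B"
  proof
    fix c assume "c \<in> C"
    then obtain v where "c = cw m Ds v" unfolding C_eq by blast
    hence "c = (\<Sum>i\<in>U. cscale (v i) (b i))" using rep by simp
    moreover have "(\<Sum>i\<in>U. cscale (v i) (b i)) \<in> cs.span ?B"
      by (rule cs.span_sum, rule cs.span_scale, rule cs.span_base) blast
    ultimately show "c \<in> cs.span ?B" by simp
  qed
  have spB: "cs.span ?B = C" by (rule cs.span_subspace[OF BC CB subspace_C])
  have spC: "cs.span C = C" using subspace_C by simp
  have val: "b i (dl j \<alpha>) = (if i = j then \<alpha> else 0)" if "i \<in> U" "dl j \<alpha> \<in> Ds" for i j \<alpha>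
    using b_apply[OF that(1)] that(2) by (simp add: dl_apply)
  have ind: "cs.independent ?B"
    unfolding cs.dependent_explicit
  proof (rule notI)
    assume "\<exists>t u. finite t \<and> t \<subseteq> ?B \<and> (\<Sum>v\<in>t. cscale (u v) v) = 0 \<and> (\<exists>v\<in>t. u v \<noteq> 0)"
    then obtain t u x where ft: "finite t" and tB: "t \<subseteq> ?B" and sum: "(\<Sum>v\<in>t. cscale (u v) v) = 0"
      and x: "x \<in> t" and ux: "u x \<noteq> 0" by blast
    from x tB obtain j where j: "j \<in> U" "x = b j" by blast
    obtain \<alpha> where a: "\<alpha> \<noteq> 0" "dl j \<alpha> \<in> Ds" using testDs[OF j(1)] by blast
    have "0 = (\<Sum>y\<in>t. cscale (u y) y) (dl j \<alpha>)" using sum by simp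
    also have "\<dots> = (\<Sum>y\<in>t. u y * y (dl j \<alpha>))" by (simp add: sum_fun_apply cscale_def)
    also have "\<dots> = (\<Sum>y\<in>t. if y = x then u y * \<alpha> else 0)"
    proof (rule sum.cong[OF refl])
      fix y assume "y \<in> t"
      then obtain i where i: "i \<in> U" "y = b i" using tB by blast
      show "u y * y (dl j \<alpha>) = (if y = x then u y * \<alpha> else 0)"
      proof (cases "y = x")
        case True
        hence "y (dl j \<alpha>) = \<alpha>" using val[OF j(1) a(2)] j(2) by simp
        thus ?thesis using True by simp
      next
        case False
        hence "i \<noteq> j" using i(2) j(2) by blast
        hence "y (dl j \<alpha>) = 0" using val[OF i(1) a(2)] i(2) by simp
        thus ?thesis using False by simp
      qed
    qed
    also have "\<dots> = u x * \<alpha>" using x ft by simp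
    finally have "0 = u x * \<alpha>" .
    hence "u x * \<alpha> = 0" by (rule sym)
    hence "u x = 0 \<or> \<alpha> = 0" by (simp only: mult_eq_0_iff)
    thus False using a(1) ux by blast
  qed
  have inj: "inj_on b U"
  proof (rule inj_onI)
    fix i j assume ij: "i \<in> U" "j \<in> U" "b i = b j"
    obtain \<alpha> where a: "\<alpha> \<noteq> 0" "dl j \<alpha> \<in> Ds" using testDs[OF ij(2)] by blast
    show "i = j" using val[OF ij(1) a(2)] val[OF ij(2) a(2)] ij(3) a(1) by (auto split: if_splits)
  qed
  have e: "cs.span ?B = cs.span C" by (simp only: spB spC)
  have "cs.dim C = card ?B" by (rule cs.dim_eq_card[OF e ind])
  thus ?thesis using card_image[OF inj] by simp
qed

definition "K = {v\<in>vecs m. cw m Ds v = 0}"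

lemma K_eq: "K = {v\<in>vecs m. \<forall>i\<in>U. v i = 0}"
proof (rule set_eqI, rule iffI)
  fix v assume v: "v \<in> K"
  have "v i = 0" if i: "i \<in> U" for i
  proof -
    obtain \<alpha> where a: "\<alpha> \<noteq> 0" "dl i \<alpha> \<in> Ds" using testDs[OF i] by blast
    have "0 = cw m Ds v (dl i \<alpha>)" using v by (simp add: K_def)
    also have "\<dots> = v i * \<alpha>" using cw_apply_Ds[OF a(2)] dotp_test i U_sub by auto
    finally show ?thesis using a(1) by simp
  qed
  thus "v \<in> {v\<in>vecs m. \<forall>i\<in>U. v i = 0}" using v by (simp add: K_def)
next
  fix v :: "nat \<Rightarrow> 'a" assume v: "v \<in> {v\<in>vecs m. \<forall>i\<in>U. v i = 0}"
  have "cw m Ds v d = 0" for d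
  proof (cases "d \<in> Ds")
    case True
    hence "d \<in> D" by (simp add: Ds_def)
    thus ?thesis using v dotp_U by (simp add: cw_def)
  qed (simp add: cw_def)
  thus "v \<in> K" using v by (auto simp: K_def fun_eq_iff)
qed

lemma card_K: "card K = 2^(3 * (m - card U))"
proof -
  define S where "S = {1..m} - U"
  let ?e = "\<lambda>f::nat \<Rightarrow> 'a. (\<lambda>x. if x \<in> S then f x else 0)"
  have KS: "K = ?e ` (PiE S (\<lambda>_. UNIV))"
  proof (rule set_eqI, rule iffI)
    fix v assume "v \<in> K"
    hence v: "v \<in> vecs m" "\<forall>i\<in>U. v i = 0" using K_eq by auto
    have "v = ?e (restrict v S)" using v by (auto simp: fun_eq_iff S_def vecs_def)
    moreover have "restrict v S \<in> PiE S (\<lambda>_. UNIV)" by simp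
    ultimately show "v \<in> ?e ` (PiE S (\<lambda>_. UNIV))" by blast
  next
    fix v assume "v \<in> ?e ` (PiE S (\<lambda>_. UNIV))"
    then obtain f where "v = ?e f" by blast
    thus "v \<in> K" unfolding K_eq by (auto simp: S_def vecs_def)
  qed
  have inj: "inj_on ?e (PiE S (\<lambda>_. UNIV))"
  proof (rule inj_onI)
    fix f g assume fg: "f \<in> PiE S (\<lambda>_. UNIV)" "g \<in> PiE S (\<lambda>_. UNIV)" "?e f = ?e g"
    show "f = g"
    proof (rule ext)
      fix x show "f x = g x"
      proof (cases "x \<in> S")
        case True
        have "?e f x = ?e g x" using fg(3) by (rule fun_cong)
        thus ?thesis using True by (simp only: if_P)
      next
        case False thus ?thesis using PiE_arb[OF fg(1) False] PiE_arb[OF fg(2) False] by (simp only:)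
      qed
    qed
  qed
  have fS: "finite S" by (simp add: S_def)
  have "card K = card (PiE S (\<lambda>_. UNIV :: 'a set))" using KS inj card_image by metis
  also have "\<dots> = 8 ^ card S" using card_PiE[OF fS, of "\<lambda>_. UNIV :: 'a set"] F8 by simp
  also have "card S = m - card U" using U_sub fU by (simp add: S_def card_Diff_subset)
  also have "(8::nat) ^ (m - card U) = 2^(3 * (m - card U))" by (simp add: power_mult)
  finally show ?thesis .
qed

lemma wt0: "wt Ds (cw m Ds v) = 0 \<longleftrightarrow> cw m Ds v = 0"
proof -
  have "wt Ds (cw m Ds v) = 0 \<longleftrightarrow> {d\<in>Ds. cw m Ds v d \<noteq> 0} = {}"
    unfolding wt_def using fDs by simp
  also have "\<dots> \<longleftrightarrow> cw m Ds v = 0" by (auto simp: fun_eq_iff cw_def)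
  finally show ?thesis .
qed

lemma wt_zero_fun: "wt Ds (0 :: (nat \<Rightarrow> 'a) \<Rightarrow> 'a) = 0" by (simp add: wt_def)

lemma fiber: assumes "v0 \<in> vecs m" shows "card {v\<in>vecs m. cw m Ds v = cw m Ds v0} = card K"
proof -
  have "{v\<in>vecs m. cw m Ds v = cw m Ds v0} = (\<lambda>k. k + v0) ` K"
  proof (rule set_eqI, rule iffI)
    fix v assume v: "v \<in> {v\<in>vecs m. cw m Ds v = cw m Ds v0}"
    have "v - v0 \<in> K" using v assms cw_diff[of Ds v v0] vecs_diff by (simp add: K_def)
    moreover have "v = (v - v0) + v0" by simp
    ultimately show "v \<in> (\<lambda>k. k + v0) ` K" by blast
  next
    fix v assume "v \<in> (\<lambda>k. k + v0) ` K"
    then obtain k where k: "k \<in> K" "v = k + v0" by blast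
    thus "v \<in> {v\<in>vecs m. cw m Ds v = cw m Ds v0}"
      using cw_add[of Ds k v0] vecs_add assms by (simp add: K_def)
  qed
  moreover have "inj_on (\<lambda>k. k + v0) K" by (rule inj_onI) simp
  ultimately show ?thesis by (simp add: card_image)
qed

lemma Zi: "card {v\<in>vecs m. wt Ds (cw m Ds v) = i} = card K * card {c\<in>C. wt Ds c = i}"
proof -
  let ?A = "{v\<in>vecs m. wt Ds (cw m Ds v) = i}"
  have fA: "finite ?A" using fin_vecs by simp
  have img: "cw m Ds ` ?A = {c\<in>C. wt Ds c = i}" unfolding C_eq by auto
  have "card ?A = card (cw m Ds ` ?A) * card K"
  proof (rule card_fibers_const[OF fA])
    fix y assume "y \<in> cw m Ds ` ?A"
    then obtain v0 where v0: "v0 \<in> vecs m" "wt Ds (cw m Ds v0) = i" "y = cw m Ds v0" by blast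
    have "{a\<in>?A. cw m Ds a = y} = {v\<in>vecs m. cw m Ds v = cw m Ds v0}" using v0 by auto
    thus "card {a\<in>?A. cw m Ds a = y} = card K" using fiber[OF v0(1)] by simp
  qed
  thus ?thesis using img by simp
qed


lemma vals: "\<exists>x>0. 2^(s-1) = 4 * x \<and> 6 * 2^(s-3) = 6 * (x::nat) \<and> 7 * 2^(s-3) = 7 * x"
proof -
  obtain t where t: "s = t + 3" using s_ge3 by (metis add.commute le_Suc_ex)
  show ?thesis by (rule exI[of _ "2^t"]) (simp add: t power_add)
qed

lemma WS:
  assumes e: "(\<exists>v\<in>vecs m. wt Ds (cw m Ds v) = 2^(s-1)) \<and> (\<exists>v\<in>vecs m. wt Ds (cw m Ds v) = 6 * 2^(s-3))
     \<and> (\<exists>v\<in>vecs m. wt Ds (cw m Ds v) = 7 * 2^(s-3))"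
  shows "wt Ds ` C = {0, 2^(s-1), 6 * 2^(s-3), 7 * 2^(s-3)}"
proof
  show "wt Ds ` C \<subseteq> {0, 2^(s-1), 6 * 2^(s-3), 7 * 2^(s-3)}"
  proof
    fix w assume "w \<in> wt Ds ` C"
    then obtain v where w: "w = wt Ds (cw m Ds v)" unfolding C_eq by blast
    obtain k where "k \<le> 3" "wt Ds (cw m Ds v) = 2^s - 2^(s-k)" using wt_values by blast
    thus "w \<in> {0, 2^(s-1), 6 * 2^(s-3), 7 * 2^(s-3)}" using pow_vals(1) w by simp
  qed
  have "0 \<in> wt Ds ` C" unfolding C_eq using vecs_0 cw_0 wt_zero_fun by (metis image_eqI)
  moreover have "x \<in> wt Ds ` C" if "\<exists>v\<in>vecs m. wt Ds (cw m Ds v) = x" for x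
    using that unfolding C_eq by (metis image_eqI)
  ultimately show "{0, 2^(s-1), 6 * 2^(s-3), 7 * 2^(s-3)} \<subseteq> wt Ds ` C" using e by blast
qed

lemma W:
  assumes e: "(\<exists>v\<in>vecs m. wt Ds (cw m Ds v) = 2^(s-1)) \<and> (\<exists>v\<in>vecs m. wt Ds (cw m Ds v) = 6 * 2^(s-3))
     \<and> (\<exists>v\<in>vecs m. wt Ds (cw m Ds v) = 7 * 2^(s-3))"
  shows "weights Ds C = {2^(s-1), 6 * 2^(s-3), 7 * 2^(s-3)}"
proof -
  obtain x :: nat where x: "x > 0" "2^(s-1) = 4 * x" "6 * 2^(s-3) = 6 * x" "7 * 2^(s-3) = 7 * x" using vals by blast
  show ?thesis unfolding weights_def
  proof
    show "wt Ds ` (C - {0}) \<subseteq> {2^(s-1), 6 * 2^(s-3), 7 * 2^(s-3)}"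
    proof
      fix w assume "w \<in> wt Ds ` (C - {0})"
      then obtain c where c: "c \<in> C" "c \<noteq> 0" "w = wt Ds c" by blast
      have "w \<in> wt Ds ` C" using c by blast
      hence w_in: "w \<in> {0, 2^(s-1), 6 * 2^(s-3), 7 * 2^(s-3)}" using WS[OF e] by (simp only:)
      from c(1) obtain v where v: "v \<in> vecs m" "c = cw m Ds v" unfolding C_eq by (rule imageE)
      have nz: "cw m Ds v \<noteq> 0" using c(2) v(2) by blast
      have w1: "wt Ds (cw m Ds v) \<noteq> 0"
      proof
        assume "wt Ds (cw m Ds v) = 0"
        hence "cw m Ds v = 0" by (rule iffD1[OF wt0])
        thus False using nz by (rule notE[rotated])
      qed
      have "w \<noteq> 0" using w1 unfolding c(3) v(2) .
      moreover note w_in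
      ultimately show "w \<in> {2^(s-1), 6 * 2^(s-3), 7 * 2^(s-3)}" by blast
    qed
    have "w \<in> wt Ds ` (C - {0})" if ex: "\<exists>v\<in>vecs m. wt Ds (cw m Ds v) = w" and nw: "w \<noteq> 0" for w
    proof -
      obtain v where v: "v \<in> vecs m" "wt Ds (cw m Ds v) = w" using ex by blast
      have "cw m Ds v \<noteq> 0" using v(2) nw wt_zero_fun by auto
      thus ?thesis using v unfolding C_eq by blast
    qed
    moreover have "2^(s-1) \<noteq> (0::nat)" "6 * 2^(s-3) \<noteq> (0::nat)" "7 * 2^(s-3) \<noteq> (0::nat)" by simp_all
    ultimately show "{2^(s-1), 6 * 2^(s-3), 7 * 2^(s-3)} \<subseteq> wt Ds ` (C - {0})" using e by blast
  qed
qed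

lemma main:
  assumes two: "(L - (M \<union> N) \<noteq> {} \<and> M - (N \<union> L) \<noteq> {})
            \<or> (M - (N \<union> L) \<noteq> {} \<and> N - (L \<union> M) \<noteq> {})
            \<or> (L - (M \<union> N) \<noteq> {} \<and> N - (L \<union> M) \<noteq> {})"
  shows "let Ds = comb3 \<omega> (Delta L) (Delta M) (Delta N) - {0};
             C = code m Ds;
             s = card L + card M + card N;
             A = (\<lambda>i. card {c \<in> C. wt Ds c = i});
             Z = (\<lambda>i. card {v \<in> vecs m. wt Ds (cw m Ds v) = i})
         in module.subspace cscale C
    \<and> card Ds = 2^s - 1
    \<and> vector_space.dim cscale C = card (L \<union> M \<union> N)
    \<and> min_dist Ds C = 2^(s-1)
    \<and> l_weight_code 3 Ds C
    \<and> wt Ds ` C = {0, 2^(s-1), 6 * 2^(s-3), 7 * 2^(s-3)}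
    \<and> Z 0 = 2^(3 * (m - card (L \<union> M \<union> N)))
    \<and> (\<forall>i \<le> card Ds. Z i = Z 0 * A i)"
proof -
  have e: "(\<exists>v\<in>vecs m. wt Ds (cw m Ds v) = 2^(s-1)) \<and> (\<exists>v\<in>vecs m. wt Ds (cw m Ds v) = 6 * 2^(s-3))
     \<and> (\<exists>v\<in>vecs m. wt Ds (cw m Ds v) = 7 * 2^(s-3))" by (rule ex3[OF two])
  have e1: "comb3 \<omega> (Delta L) (Delta M) (Delta N) - {0} = Ds" by (simp add: Ds_def D_def)
  have e2: "code m Ds = C" by (simp add: C_def)
  have e3: "card L + card M + card N = s" by (simp add: s_def)
  have e4: "L \<union> M \<union> N = U" by (simp add: U_def)
  have Z0: "card {v \<in> vecs m. wt Ds (cw m Ds v) = 0} = card K"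
    using wt0 by (simp add: K_def)
  obtain x :: nat where x: "x > 0" "2^(s-1) = 4 * x" "6 * 2^(s-3) = 6 * x" "7 * 2^(s-3) = 7 * x" using vals by blast
  have cardW: "card (weights Ds C) = 3" unfolding W[OF e] x(2-4) using x(1) by simp
  have minW: "Min (weights Ds C) = 2^(s-1)" unfolding W[OF e] x(2-4) using x(1) by simp
  have cDs: "card Ds = 2^s - 1" using card_D D_0 fD by (simp add: Ds_def card_Diff_singleton)
  show ?thesis unfolding Let_def e1 e2 e3 e4
  proof (intro conjI allI impI)
    show "module.subspace cscale C" by (rule subspace_C)
    show "card Ds = 2^s - 1" by (rule cDs)
    show "vector_space.dim cscale C = card U" by (rule dim_C)
    show "min_dist Ds C = 2^(s-1)" unfolding min_dist_def by (rule minW)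
    show "l_weight_code 3 Ds C" unfolding l_weight_code_def by (rule cardW)
    show "wt Ds ` C = {0, 2^(s-1), 6 * 2^(s-3), 7 * 2^(s-3)}" by (rule WS[OF e])
    show "card {v \<in> vecs m. wt Ds (cw m Ds v) = 0} = 2^(3 * (m - card U))" using Z0 card_K by simp
    fix i
    show "card {v \<in> vecs m. wt Ds (cw m Ds v) = i} =
      card {v \<in> vecs m. wt Ds (cw m Ds v) = 0} * card {c \<in> C. wt Ds c = i}"
      unfolding Z0 by (rule Zi)
  qed
qed

end

theorem mainTheorem3:
  fixes \<omega> :: "'a::field" and m :: nat and L M N :: "nat set"
  assumes F8: "card (UNIV :: 'a set) = 8"
    and root: "\<omega>^3 + \<omega> + 1 = 0"
    and LMN: "L \<subseteq> {1..m}" "M \<subseteq> {1..m}" "N \<subseteq> {1..m}"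
    and ne: "L \<noteq> {}" "M \<noteq> {}" "N \<noteq> {}"
    and two: "(L - (M \<union> N) \<noteq> {} \<and> M - (N \<union> L) \<noteq> {})
            \<or> (M - (N \<union> L) \<noteq> {} \<and> N - (L \<union> M) \<noteq> {})
            \<or> (L - (M \<union> N) \<noteq> {} \<and> N - (L \<union> M) \<noteq> {})"
  shows "let Ds = comb3 \<omega> (Delta L) (Delta M) (Delta N) - {0};
             C = code m Ds;
             s = card L + card M + card N;
             A = (\<lambda>i. card {c \<in> C. wt Ds c = i});
             Z = (\<lambda>i. card {v \<in> vecs m. wt Ds (cw m Ds v) = i})
         in module.subspace cscale C
    \<and> card Ds = 2^s - 1
    \<and> vector_space.dim cscale C = card (L \<union> M \<union> N)
    \<and> min_dist Ds C = 2^(s-1)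
    \<and> l_weight_code 3 Ds C
    \<and> wt Ds ` C = {0, 2^(s-1), 6 * 2^(s-3), 7 * 2^(s-3)}
    \<and> Z 0 = 2^(3 * (m - card (L \<union> M \<union> N)))
    \<and> (\<forall>i \<le> card Ds. Z i = Z 0 * A i)"
proof -
  have "setup8 \<omega> m L M N" unfolding setup8_def using F8 root LMN ne by blast
  from setup8.main[OF this two] show ?thesis .
qed

end
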